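(* Let $(P,\le)$ be a poset and $i\in\{1,2,3\}$. If $(x_n)_{n\in\mathbb N}$ is a sequence in $P$ converging to a point $x\in P$ with respect to $\tau^\omega_{O_i}(P)$, then there exists a subsequence $(x_{n_k})_{k\in\mathbb N}$ that O$_i$-converges to $x$.
   Context: For monotone nets, $y_\gamma\uparrow y$ means increasing with supremum $y$, $z_\gamma\downarrow y$ decreasing with infimum $y$; $[a,b]:=\{t:a\le t\le b\}$; directed/filtered sets are nonempty sets in which finite subsets have upper/lower bounds in the set. A net $(x_\gamma)_{\gamma\in\Gamma}$ O$_1$-converges to $x$ if there are nets $(y_\gamma)_{\gamma\in\Gamma}$, $(z_\gamma)_{\gamma\in\Gamma}$ with eventually $y_\gamma\le x_\gamma\le z_\gamma$, $y_\gamma\uparrow x$, $z_\gamma\downarrow x$; it O$_2$-converges to $x$ if there are directed $M$ and filtered $N$ with $\sup M=\inf N=x$ such that for every $(m,n)\in M\times N$ the net is eventually in $[m,n]$; it O$_3$-converges to $x$ if the same holds with $M,N$ arbitrary subsets with $\sup M=\inf N=x$. A subset $X\subseteq P$ is O$^\omega_i$-closed if no sequence in $X$ O$_i$-converges to a point outside $X$; these sets are the closed sets of the topology $\tau^\omega_{O_i}(P)$. *)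

theory Defs
  imports Main
begin

text \<open>The poset P is the whole carrier of a type of class order.\<close>

definition is_lub :: "'a::order set \<Rightarrow> 'a \<Rightarrow> bool" where
  "is_lub S x \<longleftrightarrow> (\<forall>s\<in>S. s \<le> x) \<and> (\<forall>u. (\<forall>s\<in>S. s \<le> u) \<longrightarrow> x \<le> u)"

definition is_glb :: "'a::order set \<Rightarrow> 'a \<Rightarrow> bool" where
  "is_glb S x \<longleftrightarrow> (\<forall>s\<in>S. x \<le> s) \<and> (\<forall>l. (\<forall>s\<in>S. l \<le> s) \<longrightarrow> l \<le> x)"

definition directed_set :: "'a::order set \<Rightarrow> bool" where
  "directed_set M \<longleftrightarrow> M \<noteq> {} \<and> (\<forall>F. finite F \<and> F \<subseteq> M \<longrightarrow> (\<exists>u\<in>M. \<forall>f\<in>F. f \<le> u))"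

definition filtered_set :: "'a::order set \<Rightarrow> bool" where
  "filtered_set N \<longleftrightarrow> N \<noteq> {} \<and> (\<forall>F. finite F \<and> F \<subseteq> N \<longrightarrow> (\<exists>l\<in>N. \<forall>f\<in>F. l \<le> f))"

definition O1_conv :: "(nat \<Rightarrow> 'a::order) \<Rightarrow> 'a \<Rightarrow> bool" where
  "O1_conv s x \<longleftrightarrow> (\<exists>y z. (\<forall>\<^sub>F n in sequentially. y n \<le> s n \<and> s n \<le> z n)
      \<and> mono y \<and> is_lub (range y) x \<and> antimono z \<and> is_glb (range z) x)"

definition O2_conv :: "(nat \<Rightarrow> 'a::order) \<Rightarrow> 'a \<Rightarrow> bool" where
  "O2_conv s x \<longleftrightarrow> (\<exists>M N. directed_set M \<and> filtered_set N \<and> is_lub M x \<and> is_glb N x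
      \<and> (\<forall>m\<in>M. \<forall>n\<in>N. \<forall>\<^sub>F k in sequentially. m \<le> s k \<and> s k \<le> n))"

definition O3_conv :: "(nat \<Rightarrow> 'a::order) \<Rightarrow> 'a \<Rightarrow> bool" where
  "O3_conv s x \<longleftrightarrow> (\<exists>M N. is_lub M x \<and> is_glb N x
      \<and> (\<forall>m\<in>M. \<forall>n\<in>N. \<forall>\<^sub>F k in sequentially. m \<le> s k \<and> s k \<le> n))"

definition O_conv :: "nat \<Rightarrow> (nat \<Rightarrow> 'a::order) \<Rightarrow> 'a \<Rightarrow> bool" where
  "O_conv i s x = (if i = 1 then O1_conv s x else if i = 2 then O2_conv s x else O3_conv s x)"

definition O_omega_closed :: "nat \<Rightarrow> 'a::order set \<Rightarrow> bool" where
  "O_omega_closed i X \<longleftrightarrow> (\<forall>s x. (\<forall>n. s n \<in> X) \<and> O_conv i s x \<longrightarrow> x \<in> X)"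

definition O_omega_open :: "nat \<Rightarrow> 'a::order set \<Rightarrow> bool" where
  "O_omega_open i U \<longleftrightarrow> O_omega_closed i (- U)"

definition tau_O_omega_conv :: "nat \<Rightarrow> (nat \<Rightarrow> 'a::order) \<Rightarrow> 'a \<Rightarrow> bool" where
  "tau_O_omega_conv i s x \<longleftrightarrow>
     (\<forall>U. O_omega_open i U \<and> x \<in> U \<longrightarrow> (\<forall>\<^sub>F n in sequentially. s n \<in> U))"

end

theory Submission
  imports Defs "HOL-Library.Infinite_Set"
begin

lemma ev_sub:
  assumes "\<forall>\<^sub>F k in sequentially. P k" "strict_mono (r::nat\<Rightarrow>nat)"
  shows "\<forall>\<^sub>F k in sequentially. P (r k)"
proof -
  from assms(1) obtain N where N: "\<forall>k\<ge>N. P k" by (auto simp: eventually_sequentially)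
  have "\<forall>k\<ge>N. P (r k)" using N strict_mono_imp_increasing[OF assms(2)] le_trans by blast
  thus ?thesis by (auto simp: eventually_sequentially)
qed

definition O3n :: "(nat \<Rightarrow> 'a::order) \<Rightarrow> 'a \<Rightarrow> bool" where
  "O3n s x \<longleftrightarrow> (\<exists>M N. M \<noteq> {} \<and> N \<noteq> {} \<and> is_lub M x \<and> is_glb N x
      \<and> (\<forall>m\<in>M. \<forall>n\<in>N. \<forall>\<^sub>F k in sequentially. m \<le> s k \<and> s k \<le> n))"

definition bad :: "nat \<Rightarrow> 'a::order \<Rightarrow> bool" where
  "bad i z \<longleftrightarrow> i \<noteq> 1 \<and> i \<noteq> 2 \<and> ((\<forall>u. z \<le> u) \<or> (\<forall>u. u \<le> z))"

lemma O3n_unique: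
  assumes "O3n s x" "O3n s x'"
  shows "x = x'"
proof -
  have le: "a \<le> b" if "O3n s a" "O3n s b" for a b
  proof -
    from that(1) obtain M N where M: "M \<noteq> {}" "N \<noteq> {}" "is_lub M a" "is_glb N a"
      "\<forall>m\<in>M. \<forall>n\<in>N. \<forall>\<^sub>F k in sequentially. m \<le> s k \<and> s k \<le> n"
      unfolding O3n_def by blast
    from that(2) obtain M' N' where M': "M' \<noteq> {}" "N' \<noteq> {}" "is_lub M' b" "is_glb N' b"
      "\<forall>m\<in>M'. \<forall>n\<in>N'. \<forall>\<^sub>F k in sequentially. m \<le> s k \<and> s k \<le> n"
      unfolding O3n_def by blast
    have mn: "m \<le> n" if "m \<in> M" "n \<in> N'" for m n
    proof -
      obtain n0 where n0: "n0 \<in> N" using M(2) by blast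
      obtain m0 where m0: "m0 \<in> M'" using M'(1) by blast
      have e1: "\<forall>\<^sub>F k in sequentially. (m \<le> s k \<and> s k \<le> n0)" using M(5) that n0 by blast
      have e2: "\<forall>\<^sub>F k in sequentially. (m0 \<le> s k \<and> s k \<le> n)" using M'(5) that m0 by blast
      have "\<forall>\<^sub>F k in sequentially. (m \<le> s k \<and> s k \<le> n0) \<and> (m0 \<le> s k \<and> s k \<le> n)"
        using eventually_conj[OF e1 e2] .
      then obtain k where "m \<le> s k" "s k \<le> n"
        by (metis (mono_tags, lifting) eventually_sequentially order_refl)
      thus ?thesis by (rule order_trans)
    qed
    have "\<forall>n\<in>N'. a \<le> n" using mn M(3) unfolding is_lub_def by blast
    thus ?thesis using M'(4) unfolding is_glb_def by blast
  qed
  show ?thesis using le assms by (metis order.antisym)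
qed

lemma to_O3n:
  assumes "O_conv i s z" "\<not> bad i z"
  shows "O3n s z"
proof (cases "i = 1")
  case True
  then obtain y w where yw: "\<forall>\<^sub>F n in sequentially. y n \<le> s n \<and> s n \<le> w n"
      "mono y" "is_lub (range y) z" "antimono w" "is_glb (range w) z"
    using assms(1) unfolding O_conv_def O1_conv_def by auto
  have "\<forall>m\<in>range y. \<forall>n\<in>range w. \<forall>\<^sub>F k in sequentially. m \<le> s k \<and> s k \<le> n"
  proof (intro ballI)
    fix m n assume "m \<in> range y" "n \<in> range w"
    then obtain j l where jl: "m = y j" "n = w l" by blast
    have "\<forall>\<^sub>F k in sequentially. (y k \<le> s k \<and> s k \<le> w k) \<and> k \<ge> max j l"
      using eventually_conj[OF yw(1) eventually_ge_at_top[of "max j l"]] .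
    thus "\<forall>\<^sub>F k in sequentially. m \<le> s k \<and> s k \<le> n"
    proof (rule eventually_mono)
      fix k assume k: "(y k \<le> s k \<and> s k \<le> w k) \<and> k \<ge> max j l"
      have "y j \<le> y k" using yw(2) k by (simp add: mono_def)
      moreover have "w k \<le> w l" using yw(4) k by (simp add: antimono_def)
      ultimately show "m \<le> s k \<and> s k \<le> n" using k jl by (meson order_trans)
    qed
  qed
  thus ?thesis unfolding O3n_def using yw by blast
next
  case False
  show ?thesis
  proof (cases "i = 2")
    case True
    then show ?thesis using assms(1) False unfolding O_conv_def O2_conv_def O3n_def
        directed_set_def filtered_set_def by metis
  next
    case F2: False
    then obtain M N where MN: "is_lub M z" "is_glb N z"
      "\<forall>m\<in>M. \<forall>n\<in>N. \<forall>\<^sub>F k in sequentially. m \<le> s k \<and> s k \<le> n"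
      using assms(1) False unfolding O_conv_def O3_conv_def by auto
    have "M \<noteq> {}" using MN(1) assms(2) False F2 unfolding is_lub_def bad_def by auto
    moreover have "N \<noteq> {}" using MN(2) assms(2) False F2 unfolding is_glb_def bad_def by auto
    ultimately show ?thesis using MN unfolding O3n_def by blast
  qed
qed

lemma O_unique:
  assumes "O_conv i s a" "O_conv i s b" "\<not> bad i a" "\<not> bad i b"
  shows "a = b"
  using O3n_unique to_O3n assms by metis

lemma O3n_const:
  assumes "O3n (\<lambda>_. c) z"
  shows "z = c"
proof -
  from assms obtain M N where M: "is_lub M z" "is_glb N z"
      "\<forall>m\<in>M. \<forall>n\<in>N. \<forall>\<^sub>F k in sequentially. m \<le> c \<and> c \<le> n" "M \<noteq> {}" "N \<noteq> {}"
    unfolding O3n_def by blast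
  have "\<forall>m\<in>M. m \<le> c" using M(3,5) by (metis all_not_in_conv eventually_const sequentially_bot)
  moreover have "\<forall>n\<in>N. c \<le> n" using M(3,4) by (metis all_not_in_conv eventually_const sequentially_bot)
  ultimately show ?thesis using M(1,2) unfolding is_lub_def is_glb_def by (meson order.antisym)
qed

lemma O_const_lim:
  assumes "O_conv i (\<lambda>_. c) z"
  shows "z = c \<or> bad i z"
  using assms to_O3n O3n_const by metis

lemma O_const:
  "O_conv i (\<lambda>_. c) c"
proof -
  have l: "is_lub {c} c" "is_glb {c} c" unfolding is_lub_def is_glb_def by auto
  have d: "directed_set {c}" "filtered_set {c}" unfolding directed_set_def filtered_set_def by auto
  have "range (\<lambda>_::nat. c) = {c}" by auto
  hence "is_lub (range (\<lambda>_::nat. c)) c" "is_glb (range (\<lambda>_::nat. c)) c" using l by simp_all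
  moreover have "mono (\<lambda>_::nat. c)" "antimono (\<lambda>_::nat. c)" by (auto simp: mono_def antimono_def)
  ultimately have "O1_conv (\<lambda>_. c) c" unfolding O1_conv_def
    by (intro exI[of _ "\<lambda>_::nat. c"] conjI) auto
  moreover have "O2_conv (\<lambda>_. c) c" unfolding O2_conv_def using l d
    by (intro exI[of _ "{c}"] conjI) auto
  moreover have "O3_conv (\<lambda>_. c) c" unfolding O3_conv_def using l
    by (intro exI[of _ "{c}"] conjI) auto
  ultimately show ?thesis unfolding O_conv_def by simp
qed

lemma O_sub:
  assumes "O_conv i s z" "strict_mono r"
  shows "O_conv i (s \<circ> r) z"
proof -
  have e: "\<forall>m\<in>M. \<forall>n\<in>N. \<forall>\<^sub>F k in sequentially. m \<le> (s\<circ>r) k \<and> (s\<circ>r) k \<le> n"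
    if "\<forall>m\<in>M. \<forall>n\<in>N. \<forall>\<^sub>F k in sequentially. m \<le> s k \<and> s k \<le> n" for M N
    using that ev_sub[OF _ assms(2), where P="\<lambda>k. _ \<le> s k \<and> s k \<le> _"] by simp
  show ?thesis
  proof (cases "i = 1")
    case True
    then obtain y w where yw: "\<forall>\<^sub>F n in sequentially. y n \<le> s n \<and> s n \<le> w n"
        "mono y" "is_lub (range y) z" "antimono w" "is_glb (range w) z"
      using assms(1) unfolding O_conv_def O1_conv_def by auto
    have mr: "mono r" using assms(2) strict_mono_mono by blast
    have le: "j \<le> r j" for j using strict_mono_imp_increasing[OF assms(2)] .
    have "mono (y \<circ> r)" using yw(2) mr by (simp add: mono_def)
    moreover have "antimono (w \<circ> r)" using yw(4) mr by (simp add: mono_def antimono_def)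
    moreover have "is_lub (range (y \<circ> r)) z"
      using yw(3) yw(2) le unfolding is_lub_def mono_def
      by (auto, meson order_trans)
    moreover have "is_glb (range (w \<circ> r)) z"
      using yw(5) yw(4) le unfolding is_glb_def antimono_def
      by (auto, meson order_trans)
    moreover have "\<forall>\<^sub>F n in sequentially. (y\<circ>r) n \<le> (s\<circ>r) n \<and> (s\<circ>r) n \<le> (w\<circ>r) n"
      using ev_sub[OF yw(1) assms(2)] by simp
    ultimately have "O1_conv (s \<circ> r) z" unfolding O1_conv_def by blast
    thus ?thesis using True unfolding O_conv_def by simp
  next
    case False
    show ?thesis
    proof (cases "i = 2")
      case True
      then obtain M N where "directed_set M \<and> filtered_set N \<and> is_lub M z \<and> is_glb N z
      \<and> (\<forall>m\<in>M. \<forall>n\<in>N. \<forall>\<^sub>F k in sequentially. m \<le> s k \<and> s k \<le> n)"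
        using assms(1) unfolding O_conv_def O2_conv_def by auto
      then show ?thesis using True e[of M N] unfolding O_conv_def O2_conv_def by auto
    next
      case F2: False
      then obtain M N where "is_lub M z \<and> is_glb N z
      \<and> (\<forall>m\<in>M. \<forall>n\<in>N. \<forall>\<^sub>F k in sequentially. m \<le> s k \<and> s k \<le> n)"
        using assms(1) False unfolding O_conv_def O3_conv_def by auto
      then show ?thesis using False F2 e[of M N] unfolding O_conv_def O3_conv_def by auto
    qed
  qed
qed

lemma smono_comp:
  assumes "strict_mono (f::nat\<Rightarrow>nat)" "strict_mono g"
  shows "strict_mono (f \<circ> g)"
  using assms by (simp add: strict_mono_def)

lemma sub_inf:
  assumes "infinite A" "O_conv i t z"
  shows "\<exists>g. strict_mono g \<and> (\<forall>n. g n \<in> A) \<and> O_conv i (t \<circ> g) z"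
  using infinite_enumerate[OF assms(1)] O_sub[OF assms(2)] by blast

lemma pigeon:
  assumes "finite F" "\<forall>n. t n \<in> F"
  shows "\<exists>c\<in>F. infinite {n::nat. t n = c}"
proof (rule ccontr)
  assume "\<not> ?thesis"
  hence "finite (\<Union>c\<in>F. {n. t n = c})" using assms(1) by auto
  moreover have "(\<Union>c\<in>F. {n. t n = c}) = UNIV" using assms(2) by auto
  ultimately show False by simp
qed

lemma subsing_finite:
  assumes "\<forall>a b. a \<in> S \<longrightarrow> b \<in> S \<longrightarrow> a = b"
  shows "finite S"
proof (cases "S = {}")
  case False
  then obtain a where "a \<in> S" by blast
  hence "S \<subseteq> {a}" using assms by blast
  thus ?thesis using finite_subset by blast
qed simp

lemma bad_finite: "finite {z. bad i (z::'a::order)}"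
proof -
  have "{z. bad i z} \<subseteq> {a::'a. \<forall>u. a \<le> u} \<union> {a. \<forall>u. u \<le> a}" unfolding bad_def by auto
  moreover have "finite {a::'a. \<forall>u. a \<le> u}" by (rule subsing_finite) (auto intro: order.antisym)
  moreover have "finite {a::'a. \<forall>u. u \<le> a}" by (rule subsing_finite) (auto intro: order.antisym)
  ultimately show ?thesis using finite_subset by blast
qed

lemma nat_seq_split:
  fixes f :: "nat \<Rightarrow> nat"
  shows "(\<exists>m. infinite {n. f n = m}) \<or> (\<exists>g::nat\<Rightarrow>nat. strict_mono g \<and> strict_mono (f \<circ> g))"
proof (cases "\<exists>m. infinite {n. f n = m}")
  case True thus ?thesis by blast
next
  case False
  hence fin: "finite {n. f n = m}" for m by blast
  have fb: "finite {n. f n \<le> b}" for b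
  proof -
    have "{n. f n \<le> b} = (\<Union>m\<in>{..b}. {n. f n = m})" by auto
    thus ?thesis using fin by simp
  qed
  have ex: "\<exists>n. n > k \<and> f n > f k" for k
  proof (rule ccontr)
    assume "\<not> ?thesis"
    hence "{k<..} \<subseteq> {n. f n \<le> f k}" by auto
    thus False using fb[of "f k"] finite_subset infinite_Ioi by blast
  qed
  define nxt where "nxt k = (SOME n. n > k \<and> f n > f k)" for k
  have nxt: "nxt k > k \<and> f (nxt k) > f k" for k
    unfolding nxt_def using someI_ex[OF ex[of k]] .
  define g where "g k = (nxt ^^ k) 0" for k
  have gs: "g (Suc k) = nxt (g k)" for k unfolding g_def by simp
  have "strict_mono g" unfolding strict_mono_Suc_iff using gs nxt by simp
  moreover have "strict_mono (f \<circ> g)" unfolding strict_mono_Suc_iff using gs nxt by simp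
  ultimately show ?thesis by blast
qed

lemma tau_sub:
  assumes "tau_O_omega_conv i s x" "strict_mono r"
  shows "tau_O_omega_conv i (s \<circ> r) x"
  using assms ev_sub unfolding tau_O_omega_conv_def by fastforce

lemma mainL:
  fixes u :: "nat \<Rightarrow> 'a::order"
  assumes tau: "tau_O_omega_conv i u x" and nx: "\<forall>n. u n \<noteq> x" and nb: "\<not> bad i x"
    and Yc: "\<forall>t z. (\<forall>n. t n \<in> Y) \<and> O_conv i t z \<longrightarrow> z \<in> Y \<or> bad i z"
    and xY: "x \<notin> Y"
    and lim: "\<forall>r z. strict_mono r \<and> O_conv i (u \<circ> r) z \<longrightarrow> z \<in> Y \<or> bad i z"
  shows False
proof -
  define X where "X = range u \<union> Y \<union> {z. bad i z}"
  have cl: "O_omega_closed i X" unfolding O_omega_closed_def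
  proof (intro allI impI)
    fix t z assume tz: "(\<forall>n. t n \<in> X) \<and> O_conv i t z"
    show "z \<in> X"
    proof (cases "bad i z")
      case True thus ?thesis unfolding X_def by simp
    next
      case nbz: False
      have "UNIV = {n. t n \<in> Y} \<union> {n. bad i (t n)} \<union> {n. t n \<in> range u}"
        using tz unfolding X_def by auto
      hence "infinite ({n. t n \<in> Y} \<union> {n. bad i (t n)} \<union> {n. t n \<in> range u})"
        by (metis infinite_UNIV_nat)
      hence "infinite {n. t n \<in> Y} \<or> infinite {n. bad i (t n)} \<or> infinite {n. t n \<in> range u}"
        by auto
      moreover {
        assume "infinite {n. t n \<in> Y}"
        from sub_inf[OF this] tz obtain g where "\<forall>n. g n \<in> {n. t n \<in> Y}" "O_conv i (t \<circ> g) z"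
          by blast
        hence "z \<in> Y" using Yc nbz by (metis comp_apply mem_Collect_eq)
        hence ?thesis unfolding X_def by simp
      }
      moreover {
        assume "infinite {n. bad i (t n)}"
        from sub_inf[OF this] tz obtain g where g: "\<forall>n. g n \<in> {n. bad i (t n)}" "O_conv i (t \<circ> g) z"
          by blast
        have "\<forall>n. (t \<circ> g) n \<in> {z. bad i z}" using g(1) by simp
        from pigeon[OF bad_finite this] obtain c where c: "bad i c" "infinite {n. (t \<circ> g) n = c}"
          by auto
        from sub_inf[OF c(2) g(2)] obtain g2 where g2: "\<forall>n. g2 n \<in> {n. (t \<circ> g) n = c}"
          "O_conv i (t \<circ> g \<circ> g2) z" by blast
        have "t \<circ> g \<circ> g2 = (\<lambda>_. c)" using g2(1) by auto
        hence "z = c" using O_const_lim[of i c z] g2(2) nbz by simp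
        hence ?thesis using c(1) unfolding X_def by simp
      }
      moreover {
        assume "infinite {n. t n \<in> range u}"
        from sub_inf[OF this] tz obtain g where g: "\<forall>n. g n \<in> {n. t n \<in> range u}" "O_conv i (t \<circ> g) z"
          by blast
        have "\<forall>n. \<exists>m. (t \<circ> g) n = u m" using g(1) by auto
        then obtain f where f: "\<forall>n. (t \<circ> g) n = u (f n)" by metis
        have tg: "t \<circ> g = u \<circ> f" using f by auto
        from nat_seq_split[of f] have ?thesis
        proof
          assume "\<exists>m. infinite {n. f n = m}"
          then obtain m where m: "infinite {n. f n = m}" by blast
          from sub_inf[OF m g(2)] obtain g2 where g2: "\<forall>n. g2 n \<in> {n. f n = m}"
            "O_conv i (t \<circ> g \<circ> g2) z" by blast
          have "t \<circ> g \<circ> g2 = (\<lambda>_. u m)" using g2(1) tg by (auto simp: fun_eq_iff)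
          hence "z = u m" using O_const_lim[of i "u m" z] g2(2) nbz by simp
          thus ?thesis unfolding X_def by simp
        next
          assume "\<exists>g::nat\<Rightarrow>nat. strict_mono g \<and> strict_mono (f \<circ> g)"
          then obtain g2 :: "nat \<Rightarrow> nat" where g2: "strict_mono g2" "strict_mono (f \<circ> g2)" by blast
          have "O_conv i (t \<circ> g \<circ> g2) z" using O_sub[OF g(2) g2(1)] .
          moreover have "t \<circ> g \<circ> g2 = u \<circ> (f \<circ> g2)" using tg by (simp add: o_assoc)
          ultimately have "z \<in> Y \<or> bad i z" using lim g2(2) by metis
          thus ?thesis using nbz unfolding X_def by simp
        qed
      }
      ultimately show ?thesis by blast
    qed
  qed
  have "O_omega_open i (- X)" unfolding O_omega_open_def using cl by simp
  moreover have "x \<in> - X" using nx nb xY unfolding X_def by auto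
  ultimately have "\<forall>\<^sub>F n in sequentially. u n \<in> - X" using tau unfolding tau_O_omega_conv_def by blast
  then obtain n where "u n \<in> - X" by (metis eventually_sequentially order_refl)
  thus False unfolding X_def by simp
qed

theorem mainTheorem4:
  fixes s :: "nat \<Rightarrow> 'a::order" and x :: 'a and i :: nat
  assumes "i \<in> {1, 2, 3}"
    and "tau_O_omega_conv i s x"
  shows "\<exists>r. strict_mono r \<and> O_conv i (s \<circ> r) x"
proof (rule ccontr)
  assume H: "\<not> (\<exists>r. strict_mono r \<and> O_conv i (s \<circ> r) x)"
  show False
  proof (cases "bad i x")
    case True
    hence i3: "i \<noteq> 1" "i \<noteq> 2" unfolding bad_def by auto
    have "O3_conv s x"
    proof (cases "\<forall>u. x \<le> u")
      case True
      have "is_lub {} x" "is_glb {x} x" using True unfolding is_lub_def is_glb_def by auto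
      thus ?thesis unfolding O3_conv_def by blast
    next
      case False
      hence "\<forall>u. u \<le> x" using \<open>bad i x\<close> unfolding bad_def by blast
      hence "is_lub {x} x" "is_glb {} x" unfolding is_lub_def is_glb_def by auto
      thus ?thesis unfolding O3_conv_def by blast
    qed
    hence "O_conv i (s \<circ> id) x" using i3 unfolding O_conv_def by simp
    moreover have "strict_mono (id :: nat \<Rightarrow> nat)" by (simp add: strict_mono_def)
    ultimately show False using H by blast
  next
    case nb: False
    have fin: "finite {n. s n = x}"
    proof (rule ccontr)
      assume "infinite {n. s n = x}"
      from infinite_enumerate[OF this] obtain g :: "nat \<Rightarrow> nat"
        where g: "strict_mono g" "\<forall>n. g n \<in> {n. s n = x}" by blast
      have "s \<circ> g = (\<lambda>_. x)" using g(2) by auto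
      thus False using H g(1) O_const[of i x] by metis
    qed
    have "UNIV = {n. s n = x} \<union> {n. s n \<noteq> x}" by auto
    hence "infinite {n. s n \<noteq> x}" using fin by (metis finite_UnI infinite_UNIV_nat)
    from infinite_enumerate[OF this] obtain h :: "nat \<Rightarrow> nat"
      where h: "strict_mono h" "\<forall>n. h n \<in> {n. s n \<noteq> x}" by blast
    define u where "u = s \<circ> h"
    have tau: "tau_O_omega_conv i u x" unfolding u_def using tau_sub[OF assms(2) h(1)] .
    have nx: "\<forall>n. u n \<noteq> x" using h(2) unfolding u_def by simp
    have H': "\<not> O_conv i (u \<circ> r) x" if "strict_mono r" for r
    proof
      assume "O_conv i (u \<circ> r) x"
      moreover have "u \<circ> r = s \<circ> (h \<circ> r)" unfolding u_def by (simp add: o_assoc)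
      ultimately show False using H smono_comp[OF h(1) that] by metis
    qed
    show False
    proof (cases "\<exists>r y. strict_mono r \<and> O_conv i (u \<circ> r) y \<and> \<not> bad i y")
      case True
      then obtain r :: "nat \<Rightarrow> nat" and y where ry: "strict_mono r" "O_conv i (u \<circ> r) y" "\<not> bad i y"
        by blast
      have yx: "x \<noteq> y" using H' ry by blast
      show False
      proof (rule mainL[of i "u \<circ> r" x "{y}"])
        show "tau_O_omega_conv i (u \<circ> r) x" using tau_sub[OF tau ry(1)] .
        show "\<forall>n. (u \<circ> r) n \<noteq> x" using nx by simp
        show "\<not> bad i x" using nb .
        show "x \<notin> {y}" using yx by simp
        show "\<forall>t z. (\<forall>n. t n \<in> {y}) \<and> O_conv i t z \<longrightarrow> z \<in> {y} \<or> bad i z"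
        proof (intro allI impI)
          fix t z assume tz: "(\<forall>n. t n \<in> {y}) \<and> O_conv i t z"
          hence "t = (\<lambda>_. y)" by auto
          thus "z \<in> {y} \<or> bad i z" using O_const_lim[of i y z] tz by simp
        qed
        show "\<forall>r' z. strict_mono r' \<and> O_conv i (u \<circ> r \<circ> r') z \<longrightarrow> z \<in> {y} \<or> bad i z"
        proof (intro allI impI)
          fix r' z assume rz: "strict_mono r' \<and> O_conv i (u \<circ> r \<circ> r') z"
          have "O_conv i (u \<circ> r \<circ> r') y" using O_sub[OF ry(2)] rz by blast
          thus "z \<in> {y} \<or> bad i z" using O_unique[of i "u \<circ> r \<circ> r'" z y] rz ry(3) by auto
        qed
      qed
    next
      case False
      show False
      proof (rule mainL[of i u x "{}"])
        show "tau_O_omega_conv i u x" using tau .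
        show "\<forall>n. u n \<noteq> x" using nx .
        show "\<not> bad i x" using nb .
        show "x \<notin> {}" by simp
        show "\<forall>t z. (\<forall>n. t n \<in> {}) \<and> O_conv i t z \<longrightarrow> z \<in> {} \<or> bad i z" by auto
        show "\<forall>r z. strict_mono r \<and> O_conv i (u \<circ> r) z \<longrightarrow> z \<in> {} \<or> bad i z"
          using False by blast
      qed
    qed
  qed
qed

end
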